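(* Under the standing setup, fix $i\in\{1,2\}$ and suppose $X^i$ is a Markov chain with respect to its own filtration $\mathbb F^{X^i}$ with generator $\Lambda^i(t)=[\lambda^i_{x^iy^i}(t)]_{x^i,y^i\in\mathcal X^i}$. Then $$Q^i_t\,\Lambda(t)\,C^{i,*}=\Lambda^i(t)$$ for Lebesgue-almost every $t\ge0$, in the sense that for every function $g$ on $\mathcal X^i$ and every $x^i\in\mathcal X^i$ with $\mathbb P(X^i_t=x^i)>0$, $(Q^i_t\Lambda(t)C^{i,*}g)(x^i)=\sum_{y^i\in\mathcal X^i}\lambda^i_{x^iy^i}(t)g(y^i)$. Equivalently (for $i=1$), for a.e. $t$ and such $x^1$, and all $y^1\neq x^1$, $$\sum_{x^2,y^2\in\mathcal X^2}\lambda^{x^1x^2}_{y^1y^2}(t)\,\mathbb P(X^2_t=x^2\mid X^1_t=x^1)=\lambda^1_{x^1y^1}(t).$$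
   Context: Standing setup: $(\Omega,\mathcal F,\mathbb P)$ is a probability space; $\mathcal X^n\subset\mathbb R$, $n=1,2$, are finite sets and $\mathcal X=\mathcal X^1\times\mathcal X^2$. $X=(X^1,X^2)$ is a càdlàg process with values in $\mathcal X$ which is a Markov chain in its natural filtration $\mathbb F^X$, with infinitesimal generator $\Lambda(t)=[\lambda^{x^1x^2}_{y^1y^2}(t)]$ (locally integrable, nonnegative off-diagonal, rows summing to $0$), acting on functions $f$ on $\mathcal X$ by $(\Lambda(t)f)(x)=\sum_{y}\lambda^x_y(t)f(y)$. For $i=1,2$ and $t\ge0$, the operator $Q^i_t$ maps functions $f$ on $\mathcal X$ to functions on $\mathcal X^i$ by $(Q^i_tf)(x^i)=\mathbb E_{\mathbb P}(f(X_t)\mid X^i_t=x^i)$. The extension operator $C^{i,*}$ maps a function $f^i$ on $\mathcal X^i$ to the function on $\mathcal X$ given by $(C^{i,*}f^i)(x^1,x^2)=f^i(x^i)$. *)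

theory Defs
  imports "HOL-Probability.Probability"
begin

text \<open>Generic state space 's; time is real, restricted to t \<ge> 0.
  A process is Y :: real \<Rightarrow> 'a \<Rightarrow> 's on the probability space M.\<close>

definition ev :: "'a measure \<Rightarrow> (real \<Rightarrow> 'a \<Rightarrow> 's) \<Rightarrow> real \<Rightarrow> 's \<Rightarrow> 'a set" where
  "ev M Y t y = {\<omega> \<in> space M. Y t \<omega> = y}"

definition nat_filt :: "'a measure \<Rightarrow> (real \<Rightarrow> 'a \<Rightarrow> 's) \<Rightarrow> real \<Rightarrow> 'a measure" where
  "nat_filt M Y s = sigma (space M) {ev M Y u y | u y. 0 \<le> u \<and> u \<le> s}"

definition gen_apply :: "'s set \<Rightarrow> (real \<Rightarrow> 's \<Rightarrow> 's \<Rightarrow> real) \<Rightarrow> real \<Rightarrow> ('s \<Rightarrow> real) \<Rightarrow> 's \<Rightarrow> real" where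
  "gen_apply S L t f x = (\<Sum>y\<in>S. L t x y * f y)"

definition is_generator :: "'s set \<Rightarrow> (real \<Rightarrow> 's \<Rightarrow> 's \<Rightarrow> real) \<Rightarrow> bool" where
  "is_generator S L \<longleftrightarrow>
     (\<forall>x\<in>S. \<forall>y\<in>S. \<forall>T\<ge>0. set_integrable lborel {0..T} (\<lambda>t. L t x y)) \<and>
     (\<forall>t\<ge>0. \<forall>x\<in>S. \<forall>y\<in>S. x \<noteq> y \<longrightarrow> 0 \<le> L t x y) \<and>
     (\<forall>t\<ge>0. \<forall>x\<in>S. (\<Sum>y\<in>S. L t x y) = 0)"

definition cadlag :: "'a measure \<Rightarrow> (real \<Rightarrow> 'a \<Rightarrow> 's::topological_space) \<Rightarrow> bool" where
  "cadlag M Y \<longleftrightarrow> (\<forall>\<omega>\<in>space M. \<forall>t\<ge>0.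
      continuous (at_right t) (\<lambda>u. Y u \<omega>) \<and>
      (0 < t \<longrightarrow> (\<exists>l. ((\<lambda>u. Y u \<omega>) \<longlongrightarrow> l) (at_left t))))"

text \<open>Y is a Markov chain with values in the finite set S, in its natural filtration,
  with infinitesimal generator L: Y is adapted, has the Markov property w.r.t. its
  natural filtration (E[f(Y_t) | F^Y_s] is a function of Y_s), and for every f on S the process
  f(Y_t) - \<integral>_0^t (L(u) f)(Y_u) du is an F^Y-martingale.\<close>
definition markov_chain_gen :: "'a measure \<Rightarrow> 's set \<Rightarrow> (real \<Rightarrow> 'a \<Rightarrow> 's) \<Rightarrow> (real \<Rightarrow> 's \<Rightarrow> 's \<Rightarrow> real) \<Rightarrow> bool" where
  "markov_chain_gen M S Y L \<longleftrightarrow>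
     finite S \<and> is_generator S L \<and>
     (\<forall>t\<ge>0. \<forall>\<omega>\<in>space M. Y t \<omega> \<in> S) \<and>
     (\<forall>t\<ge>0. \<forall>y. ev M Y t y \<in> sets M) \<and>
     (\<forall>s t (f::'s \<Rightarrow> real). 0 \<le> s \<and> s \<le> t \<longrightarrow>
        (\<exists>h::'s \<Rightarrow> real. \<forall>A\<in>sets (nat_filt M Y s).
           set_lebesgue_integral M A (\<lambda>\<omega>. f (Y t \<omega>)) = set_lebesgue_integral M A (\<lambda>\<omega>. h (Y s \<omega>)))) \<and>
     (\<forall>s t (f::'s \<Rightarrow> real). 0 \<le> s \<and> s \<le> t \<longrightarrow>
        integrable M (\<lambda>\<omega>. set_lebesgue_integral lborel {s..t} (\<lambda>u. gen_apply S L u f (Y u \<omega>))) \<and>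
        (\<forall>A\<in>sets (nat_filt M Y s).
           set_lebesgue_integral M A (\<lambda>\<omega>. f (Y t \<omega>) - f (Y s \<omega>)
              - set_lebesgue_integral lborel {s..t} (\<lambda>u. gen_apply S L u f (Y u \<omega>))) = 0))"

text \<open>(Q^i_t f)(x) = E(f(X_t) | Y_t = x) with Y = X^i (elementary conditional expectation,
  meaningful when P(Y_t = x) > 0).\<close>
definition Qop :: "'a measure \<Rightarrow> (real \<Rightarrow> 'a \<Rightarrow> 'b) \<Rightarrow> (real \<Rightarrow> 'a \<Rightarrow> 's) \<Rightarrow> real \<Rightarrow> ('b \<Rightarrow> real) \<Rightarrow> 's \<Rightarrow> real" where
  "Qop M X Y t f x = (\<integral>\<omega>. indicator (ev M Y t x) \<omega> * f (X t \<omega>) \<partial>M) / measure M (ev M Y t x)"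

definition coord :: "nat \<Rightarrow> real \<times> real \<Rightarrow> real" where
  "coord i p = (if i = 1 then fst p else snd p)"

definition Cext :: "nat \<Rightarrow> (real \<Rightarrow> real) \<Rightarrow> real \<times> real \<Rightarrow> real" where
  "Cext i g = (\<lambda>p. g (coord i p))"

end

theory Submission
  imports Defs
begin


lemma ae_zero_from_Ioi:
  fixes \<phi> :: "real \<Rightarrow> real"
  assumes int: "integrable lborel \<phi>" and z: "\<And>x. set_lebesgue_integral lborel {x<..} \<phi> = 0"
  shows "AE u in lborel. \<phi> u = 0"
proof -
  have meas: "\<phi> \<in> borel_measurable lborel" using int by auto
  define p where "p = (\<lambda>u. max 0 (\<phi> u))"
  define n where "n = (\<lambda>u. max 0 (- \<phi> u))"
  have ip: "integrable lborel (\<lambda>u. p u * indicator A u)" if "A \<in> sets borel" for A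
  proof -
    have "integrable lborel p" unfolding p_def using int by (intro Bochner_Integration.integrable_max) auto
    then show ?thesis using that by (intro integrable_real_mult_indicator) auto
  qed
  have inn: "integrable lborel (\<lambda>u. n u * indicator A u)" if "A \<in> sets borel" for A
  proof -
    have "integrable lborel n" unfolding n_def using int by (intro Bochner_Integration.integrable_max) auto
    then show ?thesis using that by (intro integrable_real_mult_indicator) auto
  qed
  have em: "emeasure (density lborel (\<lambda>u. ennreal (q u))) A = ennreal (\<integral>u. q u * indicator A u \<partial>lborel)"
    if "A \<in> sets borel" "integrable lborel (\<lambda>u. q u * indicator A u)" "\<And>u. 0 \<le> q u"
       "q \<in> borel_measurable borel" for A :: "real set" and q :: "real \<Rightarrow> real"
  proof -
    have "emeasure (density lborel (\<lambda>u. ennreal (q u))) A = (\<integral>\<^sup>+u. ennreal (q u) * indicator A u \<partial>lborel)"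
      using that by (subst emeasure_density) auto
    also have "\<dots> = (\<integral>\<^sup>+u. ennreal (q u * indicator A u) \<partial>lborel)"
      by (intro nn_integral_cong) (auto simp: indicator_def)
    also have "\<dots> = ennreal (\<integral>u. q u * indicator A u \<partial>lborel)"
      using that by (intro nn_integral_eq_integral) auto
    finally show ?thesis .
  qed
  have "density lborel (\<lambda>u. ennreal (p u)) = density lborel (\<lambda>u. ennreal (n u))"
  proof (rule measure_eqI_lessThan)
    fix x :: real
    show "emeasure (density lborel (\<lambda>u. ennreal (p u))) {x<..} < \<infinity>"
      using em[of "{x<..}" p] ip[of "{x<..}"] meas by (simp add: p_def)
    have "(\<integral>u. p u * indicator {x<..} u \<partial>lborel) - (\<integral>u. n u * indicator {x<..} u \<partial>lborel)
        = (\<integral>u. p u * indicator {x<..} u - n u * indicator {x<..} u \<partial>lborel)"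
      using ip[of "{x<..}"] inn[of "{x<..}"] by (intro Bochner_Integration.integral_diff[symmetric]) auto
    also have "\<dots> = set_lebesgue_integral lborel {x<..} \<phi>"
      unfolding set_lebesgue_integral_def
      by (intro Bochner_Integration.integral_cong) (auto simp: p_def n_def indicator_def max_def)
    finally have "(\<integral>u. p u * indicator {x<..} u \<partial>lborel) = (\<integral>u. n u * indicator {x<..} u \<partial>lborel)"
      using z[of x] by simp
    then show "emeasure (density lborel (\<lambda>u. ennreal (p u))) {x<..} = emeasure (density lborel (\<lambda>u. ennreal (n u))) {x<..}"
      using em[of "{x<..}" p] ip[of "{x<..}"] em[of "{x<..}" n] inn[of "{x<..}"] meas by (simp add: p_def n_def)
  qed auto
  then have "AE u in lborel. ennreal (p u) = ennreal (n u)"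
    using meas by (intro sigma_finite_measure.density_unique[OF sigma_finite_lborel]) (auto simp: p_def n_def)
  then show ?thesis
    by eventually_elim (auto simp: p_def n_def max_def split: if_splits)
qed

lemma ae_zero_from_intervals:
  fixes \<Phi> :: "real \<Rightarrow> real"
  assumes int: "\<And>T. 0 \<le> T \<Longrightarrow> set_integrable lborel {0..T} \<Phi>"
    and z: "\<And>a b. 0 \<le> a \<Longrightarrow> a \<le> b \<Longrightarrow> set_lebesgue_integral lborel {a..b} \<Phi> = 0"
  shows "AE t in lborel. 0 \<le> t \<longrightarrow> \<Phi> t = 0"
proof -
  have n: "AE t in lborel. t \<in> {0..real n} \<longrightarrow> \<Phi> t = 0" for n :: nat
  proof -
    define \<psi> where "\<psi> = (\<lambda>u. indicator {0..real n} u * \<Phi> u)"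
    have ipsi: "integrable lborel \<psi>" using int[of "real n"] unfolding \<psi>_def set_integrable_def by simp
    have "set_lebesgue_integral lborel {x<..} \<psi> = 0" for x
    proof -
      have eq: "set_lebesgue_integral lborel {x<..} \<psi> = set_lebesgue_integral lborel ({x<..} \<inter> {0..real n}) \<Phi>"
        unfolding set_lebesgue_integral_def \<psi>_def
        by (intro Bochner_Integration.integral_cong) (auto simp: indicator_def)
      consider "x < 0" | "0 \<le> x" "x \<le> real n" | "real n < x" by linarith
      then show ?thesis
      proof cases
        case 1
        then have "{x<..} \<inter> {0..real n} = {0..real n}" by auto
        then show ?thesis using eq z[of 0 "real n"] by simp
      next
        case 2
        then have e2: "{x<..} \<inter> {0..real n} = {x<..real n}" by auto
        have si1: "set_integrable lborel {x<..real n} \<Phi>"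
          using 2 by (intro set_integrable_subset[OF int[of "real n"]]) auto
        have si2: "set_integrable lborel {x..real n} \<Phi>"
          using 2 by (intro set_integrable_subset[OF int[of "real n"]]) auto
        have "set_lebesgue_integral lborel {x<..real n} \<Phi> = set_lebesgue_integral lborel {x..real n} \<Phi>"
        proof (rule set_integral_cong_set)
          show "set_borel_measurable lborel {x..real n} \<Phi>" using si2
            unfolding set_integrable_def set_borel_measurable_def by auto
          show "set_borel_measurable lborel {x<..real n} \<Phi>" using si1
            unfolding set_integrable_def set_borel_measurable_def by auto
          show "AE u in lborel. (u \<in> {x..real n}) = (u \<in> {x<..real n})"
            using AE_lborel_singleton[of x] by eventually_elim auto
        qed
        then show ?thesis using eq e2 z[of x "real n"] 2 by simp
      next
        case 3
        then have "{x<..} \<inter> {0..real n} = {}" by auto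
        then show ?thesis using eq by (simp add: set_lebesgue_integral_def)
      qed
    qed
    then have "AE u in lborel. \<psi> u = 0" by (intro ae_zero_from_Ioi[OF ipsi])
    then show ?thesis by eventually_elim (auto simp: \<psi>_def)
  qed
  have "AE t in lborel. \<forall>n::nat. t \<in> {0..real n} \<longrightarrow> \<Phi> t = 0"
    using n by (subst AE_all_countable) auto
  then show ?thesis
  proof eventually_elim
    case (elim t)
    show ?case
    proof
      assume "0 \<le> t"
      obtain n :: nat where "t \<le> real n" using real_arch_simple by blast
      then show "\<Phi> t = 0" using elim \<open>0 \<le> t\<close> by auto
    qed
  qed
qed

lemma HK_of_local:
  fixes f :: "real \<Rightarrow> real"
  assumes "\<And>T. 0 \<le> T \<Longrightarrow> set_integrable lborel {0..T} f" "0 \<le> s" "s \<le> t"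
  shows "f integrable_on {s..t}" "set_lebesgue_integral lborel {s..t} f = integral {s..t} f"
proof -
  have "set_integrable lborel {s..t} f"
    using assms by (intro set_integrable_subset[OF assms(1)[of t]]) auto
  then show "f integrable_on {s..t}" "set_lebesgue_integral lborel {s..t} f = integral {s..t} f"
    using set_borel_integral_eq_integral by auto
qed

lemma zero_from_local_bound:
  fixes \<Phi> \<kappa> C :: "real \<Rightarrow> real"
  assumes i\<Phi>: "\<And>T. 0 \<le> T \<Longrightarrow> set_integrable lborel {0..T} \<Phi>"
    and i\<kappa>: "\<And>T. 0 \<le> T \<Longrightarrow> set_integrable lborel {0..T} \<kappa>"
    and iC: "\<And>T. 0 \<le> T \<Longrightarrow> set_integrable lborel {0..T} C"
    and \<kappa>nn: "\<And>u. 0 \<le> u \<Longrightarrow> 0 \<le> \<kappa> u"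
    and Cnn: "\<And>u. 0 \<le> u \<Longrightarrow> 0 \<le> C u"
    and bnd: "\<And>s h. 0 \<le> s \<Longrightarrow> 0 \<le> h \<Longrightarrow>
       \<bar>set_lebesgue_integral lborel {s..s+h} \<Phi>\<bar> \<le>
         set_lebesgue_integral lborel {s..s+h} \<kappa> * set_lebesgue_integral lborel {s..s+h} C"
    and ab: "0 \<le> a" "a \<le> b"
  shows "set_lebesgue_integral lborel {a..b} \<Phi> = 0"
proof -
  have HK\<Phi>: "\<Phi> integrable_on {s..t}" "set_lebesgue_integral lborel {s..t} \<Phi> = integral {s..t} \<Phi>"
    if "0 \<le> s" "s \<le> t" for s t using HK_of_local[of \<Phi> s t] i\<Phi> that by auto
  have HK\<kappa>: "\<kappa> integrable_on {s..t}" "set_lebesgue_integral lborel {s..t} \<kappa> = integral {s..t} \<kappa>"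
    if "0 \<le> s" "s \<le> t" for s t using HK_of_local[of \<kappa> s t] i\<kappa> that by auto
  have HKC: "C integrable_on {s..t}" "set_lebesgue_integral lborel {s..t} C = integral {s..t} C"
    if "0 \<le> s" "s \<le> t" for s t using HK_of_local[of C s t] iC that by auto
  have bndHK: "\<bar>integral {s..s+h} \<Phi>\<bar> \<le> integral {s..s+h} \<kappa> * integral {s..s+h} C"
    if "0 \<le> s" "0 \<le> h" for s h
    using bnd[OF that] HK\<Phi>(2)[of s "s+h"] HK\<kappa>(2)[of s "s+h"] HKC(2)[of s "s+h"] that by simp
  have Cpos: "0 \<le> integral {s..t} C" if "0 \<le> s" "s \<le> t" for s t
    using HKC(1)[OF that] Cnn that by (intro integral_nonneg) auto
  have main: "\<bar>integral {a..b} \<Phi>\<bar> \<le> e * integral {a..b} C" if e: "0 < e" for e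
  proof -
    define K where "K = (\<lambda>x. integral {a..x} \<kappa>)"
    have "continuous_on {a..b} K" unfolding K_def
      using HK\<kappa>(1)[OF ab] by (rule indefinite_integral_continuous_1)
    then have "uniformly_continuous_on {a..b} K" by (intro compact_uniformly_continuous) auto
    then obtain d where d: "d > 0" and dK: "\<And>x x'. x \<in> {a..b} \<Longrightarrow> x' \<in> {a..b} \<Longrightarrow> dist x' x < d \<Longrightarrow> dist (K x') (K x) < e"
      using e unfolding uniformly_continuous_on_def by metis
    obtain n :: nat where n: "(b - a) / d < real n" using reals_Archimedean2 by blast
    have npos: "0 < real n" using n ab d by (smt (verit) divide_nonneg_pos)
    define h where "h = (b - a) / real n"
    have h0: "0 \<le> h" using ab npos by (simp add: h_def)
    have hd: "h < d" using n d npos ab unfolding h_def by (simp add: field_simps)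
    have hn: "a + real n * h = b" using npos by (simp add: h_def)
    have step: "\<bar>integral {a..a + real m * h} \<Phi>\<bar> \<le> e * integral {a..a + real m * h} C" if "m \<le> n" for m
      using that
    proof (induction m)
      case 0
      then show ?case by simp
    next
      case (Suc m)
      define s where "s = a + real m * h"
      have s0: "0 \<le> s" "a \<le> s" using ab h0 by (auto simp: s_def)
      have sb: "s + h \<le> b"
      proof -
        have "real (Suc m) * h \<le> real n * h" using Suc.prems h0 by (intro mult_right_mono) auto
        then show ?thesis using hn by (simp add: s_def algebra_simps)
      qed
      have eqS: "a + real (Suc m) * h = s + h" by (simp add: s_def algebra_simps)
      have c\<Phi>: "integral {a..s+h} \<Phi> = integral {a..s} \<Phi> + integral {s..s+h} \<Phi>"
        using s0 h0 ab by (intro Henstock_Kurzweil_Integration.integral_combine[symmetric] HK\<Phi>(1)) auto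
      have cC: "integral {a..s+h} C = integral {a..s} C + integral {s..s+h} C"
        using s0 h0 ab by (intro Henstock_Kurzweil_Integration.integral_combine[symmetric] HKC(1)) auto
      have c\<kappa>: "integral {s..s+h} \<kappa> = K (s+h) - K s"
        unfolding K_def using s0 h0 ab by (subst Henstock_Kurzweil_Integration.integral_combine[symmetric, of a s "s+h"]) (auto intro: HK\<kappa>(1))
      have "dist (K (s+h)) (K s) < e" using s0 sb h0 hd by (intro dK) (auto simp: dist_real_def)
      then have k: "integral {s..s+h} \<kappa> \<le> e" using c\<kappa> by (simp add: dist_real_def)
      have "\<bar>integral {s..s+h} \<Phi>\<bar> \<le> integral {s..s+h} \<kappa> * integral {s..s+h} C"
        using bndHK s0 h0 by auto
      also have "\<dots> \<le> e * integral {s..s+h} C"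
        using k Cpos[of s "s+h"] s0 h0 by (intro mult_right_mono) auto
      finally have "\<bar>integral {s..s+h} \<Phi>\<bar> \<le> e * integral {s..s+h} C" .
      moreover have "\<bar>integral {a..s} \<Phi>\<bar> \<le> e * integral {a..s} C" using Suc by (simp add: s_def)
      ultimately show ?case unfolding eqS c\<Phi> cC by (simp add: algebra_simps abs_triangle_ineq order_trans[OF abs_triangle_ineq])
    qed
    show ?thesis using step[of n] hn by simp
  qed
  have "\<bar>integral {a..b} \<Phi>\<bar> \<le> 0"
  proof (rule field_le_epsilon)
    fix e :: real assume "0 < e"
    define e' where "e' = e / (integral {a..b} C + 1)"
    have cp: "0 \<le> integral {a..b} C" using Cpos ab by auto
    have "0 < e'" using \<open>0 < e\<close> cp by (simp add: e'_def)
    then have "\<bar>integral {a..b} \<Phi>\<bar> \<le> e' * integral {a..b} C" by (rule main)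
    also have "\<dots> \<le> e" using cp \<open>0 < e\<close> by (simp add: e'_def field_simps)
    finally show "\<bar>integral {a..b} \<Phi>\<bar> \<le> 0 + e" by simp
  qed
  then show ?thesis using HK\<Phi>(2)[OF ab] by simp
qed



locale proc = prob_space M for M :: "'a measure" +
  fixes S :: "(real \<times> real) set" and X :: "real \<Rightarrow> 'a \<Rightarrow> real \<times> real"
  assumes finS: "finite S"
    and inS: "\<And>t \<omega>. 0 \<le> t \<Longrightarrow> \<omega> \<in> space M \<Longrightarrow> X t \<omega> \<in> S"
    and evm: "\<And>t z. 0 \<le> t \<Longrightarrow> {\<omega> \<in> space M. X t \<omega> = z} \<in> sets M"
    and rc: "\<And>t \<omega>. 0 \<le> t \<Longrightarrow> \<omega> \<in> space M \<Longrightarrow> continuous (at_right t) (\<lambda>u. X u \<omega>)"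
begin

lemma Xmeas: assumes "0 \<le> t" shows "X t \<in> borel_measurable M"
proof -
  have "(\<lambda>\<omega>. \<Sum>z\<in>S. indicator {\<omega> \<in> space M. X t \<omega> = z} \<omega> *\<^sub>R z) \<in> borel_measurable M"
    using evm[OF assms] by (intro borel_measurable_sum borel_measurable_scaleR borel_measurable_indicator) auto
  moreover have "(\<Sum>z\<in>S. indicator {\<omega> \<in> space M. X t \<omega> = z} \<omega> *\<^sub>R z) = X t \<omega>" if "\<omega> \<in> space M" for \<omega>
  proof -
    have "(\<Sum>z\<in>S. indicator {\<omega> \<in> space M. X t \<omega> = z} \<omega> *\<^sub>R z) = (\<Sum>z\<in>S. if X t \<omega> = z then z else 0)"
      using that by (intro sum.cong) (auto simp: indicator_def)
    also have "\<dots> = X t \<omega>" using finS inS[OF assms that] by (simp add: sum.delta)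
    finally show ?thesis .
  qed
  ultimately show ?thesis by (rule measurable_cong[THEN iffD1, rotated]) simp
qed

lemma decomp:
  assumes "0 \<le> t" "A \<in> sets M"
  shows "(\<integral>\<omega>. indicator A \<omega> * F (X t \<omega>) \<partial>M) = (\<Sum>z\<in>S. F z * prob (A \<inter> {\<omega> \<in> space M. X t \<omega> = z}))"
proof -
  have "(\<integral>\<omega>. indicator A \<omega> * F (X t \<omega>) \<partial>M) = (\<integral>\<omega>. (\<Sum>z\<in>S. F z * indicator (A \<inter> {\<omega> \<in> space M. X t \<omega> = z}) \<omega>) \<partial>M)"
  proof (intro Bochner_Integration.integral_cong refl)
    fix \<omega> assume "\<omega> \<in> space M"
    then have "(\<Sum>z\<in>S. F z * indicator (A \<inter> {\<omega> \<in> space M. X t \<omega> = z}) \<omega>) = (\<Sum>z\<in>S. if X t \<omega> = z then F z * indicator A \<omega> else 0)"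
      by (intro sum.cong) (auto simp: indicator_def)
    also have "\<dots> = indicator A \<omega> * F (X t \<omega>)" using finS inS[OF assms(1) \<open>\<omega> \<in> space M\<close>] by (simp add: sum.delta)
    finally show "indicator A \<omega> * F (X t \<omega>) = (\<Sum>z\<in>S. F z * indicator (A \<inter> {\<omega> \<in> space M. X t \<omega> = z}) \<omega>)" by simp
  qed
  also have "\<dots> = (\<Sum>z\<in>S. F z * prob (A \<inter> {\<omega> \<in> space M. X t \<omega> = z}))"
  proof -
    have m: "A \<inter> {\<omega> \<in> space M. X t \<omega> = z} \<in> sets M" for z using assms evm by auto
    have "(\<integral>\<omega>. (\<Sum>z\<in>S. F z * indicator (A \<inter> {\<omega> \<in> space M. X t \<omega> = z}) \<omega>) \<partial>M)
       = (\<Sum>z\<in>S. (\<integral>\<omega>. F z * indicator (A \<inter> {\<omega> \<in> space M. X t \<omega> = z}) \<omega> \<partial>M))"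
      using m by (intro Bochner_Integration.integral_sum integrable_mult_right integrable_real_indicator) (auto simp: less_top[symmetric])
    also have "\<dots> = (\<Sum>z\<in>S. F z * prob (A \<inter> {\<omega> \<in> space M. X t \<omega> = z}))"
      using m by (intro sum.cong refl) (simp add: Int_absorb2 sets.sets_into_space)
    finally show ?thesis .
  qed
  finally show ?thesis .
qed

lemma Zmeas: "(\<lambda>p. X (max 0 (fst p)) (snd p)) \<in> borel_measurable ((lborel::real measure) \<Otimes>\<^sub>M M)"
proof -
  define d where "d = (\<lambda>(n::nat) (u::real). (of_int \<lfloor>real (Suc n) * u\<rfloor> + 1) / real (Suc n))"
  have dgt: "u < d n u" for n u
  proof -
    have "real (Suc n) * u < of_int \<lfloor>real (Suc n) * u\<rfloor> + 1" by linarith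
    then show ?thesis unfolding d_def by (simp add: field_simps)
  qed
  have dle: "d n u \<le> u + inverse (real (Suc n))" for n u
  proof -
    have "of_int \<lfloor>real (Suc n) * u\<rfloor> + 1 \<le> real (Suc n) * u + 1" by linarith
    then have "d n u \<le> (real (Suc n) * u + 1) / real (Suc n)" unfolding d_def
      by (intro divide_right_mono) auto
    also have "\<dots> = u + inverse (real (Suc n))" by (simp add: field_simps)
    finally show ?thesis .
  qed
  have mn: "(\<lambda>p. X (max 0 (d n (max 0 (fst p)))) (snd p)) \<in> borel_measurable ((lborel::real measure) \<Otimes>\<^sub>M M)" for n
  proof -
    have g: "(\<lambda>p. \<lfloor>real (Suc n) * max 0 (fst p)\<rfloor>) \<in> ((lborel::real measure) \<Otimes>\<^sub>M M) \<rightarrow>\<^sub>M count_space UNIV"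
    proof (rule measurable_compose[OF _ measurable_real_floor])
      show "(\<lambda>p. real (Suc n) * max 0 (fst p)) \<in> borel_measurable ((lborel::real measure) \<Otimes>\<^sub>M M)" by measurable
    qed
    have f: "(\<lambda>p. X (max 0 ((of_int k + 1) / real (Suc n))) (snd p)) \<in> borel_measurable ((lborel::real measure) \<Otimes>\<^sub>M M)" for k :: int
      by (rule measurable_compose[OF measurable_snd Xmeas]) simp
    show ?thesis
      using measurable_compose_countable[where f = "\<lambda>k p. X (max 0 ((of_int k + 1) / real (Suc n))) (snd p)", OF f g]
      by (simp add: d_def)
  qed
  show ?thesis
  proof (rule borel_measurable_LIMSEQ_metric[OF mn])
    fix p assume p: "p \<in> space ((lborel::real measure) \<Otimes>\<^sub>M M)"
    define u where "u = max 0 (fst p)"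
    have \<omega>: "snd p \<in> space M" using p by (auto simp: space_pair_measure)
    have u0: "0 \<le> u" by (simp add: u_def)
    have mx: "max 0 (d n u) = d n u" for n using dgt[of u n] u0 by simp
    have dl: "(\<lambda>n. d n u) \<longlonglongrightarrow> u"
    proof (rule tendsto_sandwich[of "\<lambda>n. u" _ _ "\<lambda>n. u + inverse (real (Suc n))"])
      show "\<forall>\<^sub>F n in sequentially. u \<le> d n u" using dgt by (auto intro: less_imp_le always_eventually)
      show "\<forall>\<^sub>F n in sequentially. d n u \<le> u + inverse (real (Suc n))" using dle by (auto intro: always_eventually)
      show "(\<lambda>n. u) \<longlonglongrightarrow> u" by simp
      show "(\<lambda>n. u + inverse (real (Suc n))) \<longlonglongrightarrow> u"
        using tendsto_add[OF tendsto_const LIMSEQ_inverse_real_of_nat, of u] by simp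
    qed
    have fl: "filterlim (\<lambda>n. d n u) (at_right u) sequentially"
      by (rule tendsto_imp_filterlim_at_right[OF dl]) (use dgt in \<open>auto intro: always_eventually\<close>)
    have "((\<lambda>v. X v (snd p)) \<longlongrightarrow> X u (snd p)) (at_right u)"
      using rc[OF u0 \<omega>] by (simp add: continuous_within)
    from filterlim_compose[OF this fl]
    show "(\<lambda>n. X (max 0 (d n (max 0 (fst p)))) (snd p)) \<longlonglongrightarrow> X (max 0 (fst p)) (snd p)"
      by (simp add: mx u_def[symmetric])
  qed
qed

lemma PSF: "pair_sigma_finite (lborel::real measure) M"
  by (intro pair_sigma_finite.intro sigma_finite_lborel) unfold_locales

lemma fubini_path:
  fixes G :: "real \<Rightarrow> real \<times> real \<Rightarrow> real"
  assumes st: "0 \<le> s" "s \<le> t" and A: "A \<in> sets M"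
    and iG: "\<And>z. z \<in> S \<Longrightarrow> set_integrable lborel {s..t} (\<lambda>u. G u z)"
  shows "(\<integral>\<omega>. indicator A \<omega> * set_lebesgue_integral lborel {s..t} (\<lambda>u. G u (X u \<omega>)) \<partial>M)
        = set_lebesgue_integral lborel {s..t} (\<lambda>u. \<Sum>z\<in>S. G u z * prob (A \<inter> {\<omega>\<in>space M. X u \<omega> = z}))"
    and "set_integrable lborel {s..t} (\<lambda>u. \<Sum>z\<in>S. G u z * prob (A \<inter> {\<omega>\<in>space M. X u \<omega> = z}))"
proof -
  define Z where "Z = (\<lambda>p. X (max 0 (fst p)) (snd p))"
  define g where "g = (\<lambda>z u. indicator {s..t} u * G u z)"
  define H where "H = (\<lambda>p. indicator A (snd p) * (\<Sum>z\<in>S. g z (fst p) * indicator {z} (Z p)))"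
  define B where "B = (\<lambda>u. \<Sum>z\<in>S. \<bar>g z u\<bar>)"
  define R where "R = (\<lambda>u. \<Sum>z\<in>S. G u z * prob (A \<inter> {\<omega>\<in>space M. X u \<omega> = z}))"
  have ig: "integrable lborel (g z)" if "z \<in> S" for z
    using iG[OF that] unfolding set_integrable_def g_def by simp
  have gm: "g z \<in> borel_measurable lborel" if "z \<in> S" for z using ig[OF that] by auto
  have iB: "integrable lborel B" unfolding B_def using ig by (intro Bochner_Integration.integrable_sum integrable_abs) auto
  have Zm: "Z \<in> borel_measurable (lborel \<Otimes>\<^sub>M M)" unfolding Z_def by (rule Zmeas)
  have Hm: "H \<in> borel_measurable (lborel \<Otimes>\<^sub>M M)"
    unfolding H_def
  proof (intro borel_measurable_times borel_measurable_sum)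
    show "(\<lambda>p. indicator A (snd p)) \<in> borel_measurable (lborel \<Otimes>\<^sub>M M)"
      using A by measurable
    fix z assume "z \<in> S"
    show "(\<lambda>p. g z (fst p)) \<in> borel_measurable (lborel \<Otimes>\<^sub>M M)"
      by (rule measurable_compose[OF measurable_fst]) (use gm[OF \<open>z \<in> S\<close>] in simp)
    show "(\<lambda>p. indicator {z} (Z p) :: real) \<in> borel_measurable (lborel \<Otimes>\<^sub>M M)"
      by (rule measurable_compose[OF Zm]) simp
  qed
  have Hb: "\<bar>H p\<bar> \<le> B (fst p)" for p
  proof -
    have "\<bar>H p\<bar> \<le> \<bar>\<Sum>z\<in>S. g z (fst p) * indicator {z} (Z p)\<bar>"
      unfolding H_def by (auto simp: indicator_def abs_mult)
    also have "\<dots> \<le> (\<Sum>z\<in>S. \<bar>g z (fst p) * indicator {z} (Z p)\<bar>)" by (rule sum_abs)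
    also have "\<dots> \<le> B (fst p)" unfolding B_def
      by (intro sum_mono) (auto simp: indicator_def abs_mult)
    finally show ?thesis .
  qed
  have Bnn: "0 \<le> B u" for u unfolding B_def by (intro sum_nonneg) auto
  have Hsec: "(\<lambda>\<omega>. H (u, \<omega>)) \<in> borel_measurable M" for u
    using measurable_Pair2[OF Hm, of u] by simp
  have iH: "integrable (lborel \<Otimes>\<^sub>M M) H"
  proof (rule pair_sigma_finite.Fubini_integrable[OF PSF Hm])
    have "(\<lambda>u. \<integral>\<omega>. norm (H (u, \<omega>)) \<partial>M) \<in> borel_measurable lborel"
      using Hm by (intro sigma_finite_measure.borel_measurable_lebesgue_integral[of M]) (auto intro: sigma_finite_measure_axioms)
    moreover have "norm (\<integral>\<omega>. norm (H (u, \<omega>)) \<partial>M) \<le> norm (B u)" for u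
    proof -
      have "(\<integral>\<omega>. norm (H (u, \<omega>)) \<partial>M) \<le> (\<integral>\<omega>. B u \<partial>M)"
        using Hb[of "(u, _)"] Hsec[of u] Bnn[of u]
        by (intro integral_mono integrable_const_bound[where B="B u"]) auto
      moreover have "0 \<le> (\<integral>\<omega>. norm (H (u, \<omega>)) \<partial>M)" by simp
      moreover have "0 \<le> B u" unfolding B_def by (intro sum_nonneg) auto
      ultimately show ?thesis by (simp add: prob_space)
    qed
    ultimately show "integrable lborel (\<lambda>u. \<integral>\<omega>. norm (H (u, \<omega>)) \<partial>M)"
      by (intro Bochner_Integration.integrable_bound[OF iB]) auto
    show "AE u in lborel. integrable M (\<lambda>\<omega>. H (u, \<omega>))"
      using Hb Hsec by (intro AE_I2 integrable_const_bound[where B="B _"]) auto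
  qed
  have Fub: "(\<integral>\<omega>. (\<integral>u. H (u, \<omega>) \<partial>lborel) \<partial>M) = (\<integral>u. (\<integral>\<omega>. H (u, \<omega>) \<partial>M) \<partial>lborel)"
    using pair_sigma_finite.Fubini_integral[OF PSF, of "\<lambda>u \<omega>. H (u, \<omega>)"] iH by simp
  have left: "(\<integral>u. H (u, \<omega>) \<partial>lborel) = indicator A \<omega> * set_lebesgue_integral lborel {s..t} (\<lambda>u. G u (X u \<omega>))"
    if \<omega>: "\<omega> \<in> space M" for \<omega>
  proof -
    have "(\<integral>u. H (u, \<omega>) \<partial>lborel) = indicator A \<omega> * (\<integral>u. (\<Sum>z\<in>S. g z u * indicator {z} (Z (u, \<omega>))) \<partial>lborel)"
      unfolding H_def by simp
    also have "(\<integral>u. (\<Sum>z\<in>S. g z u * indicator {z} (Z (u, \<omega>))) \<partial>lborel) = set_lebesgue_integral lborel {s..t} (\<lambda>u. G u (X u \<omega>))"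
      unfolding set_lebesgue_integral_def
    proof (intro Bochner_Integration.integral_cong refl)
      fix u :: real
      show "(\<Sum>z\<in>S. g z u * indicator {z} (Z (u, \<omega>))) = indicator {s..t} u *\<^sub>R G u (X u \<omega>)"
      proof (cases "u \<in> {s..t}")
        case True
        then have u0: "0 \<le> u" using st by auto
        have "(\<Sum>z\<in>S. g z u * indicator {z} (Z (u, \<omega>))) = (\<Sum>z\<in>S. if X u \<omega> = z then G u z else 0)"
          using True u0 by (intro sum.cong) (auto simp: g_def Z_def indicator_def)
        also have "\<dots> = G u (X u \<omega>)" using finS inS[OF u0 \<omega>] by (simp add: sum.delta)
        finally show ?thesis using True by simp
      next
        case False
        then show ?thesis by (simp add: g_def)
      qed
    qed
    finally show ?thesis .
  qed
  have right: "(\<integral>\<omega>. H (u, \<omega>) \<partial>M) = indicator {s..t} u * R u" for u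
  proof (cases "u \<in> {s..t}")
    case True
    then have u0: "0 \<le> u" using st by auto
    define F where "F = (\<lambda>y. \<Sum>z\<in>S. g z u * indicator {z} y)"
    have "(\<integral>\<omega>. H (u, \<omega>) \<partial>M) = (\<integral>\<omega>. indicator A \<omega> * F (X u \<omega>) \<partial>M)"
      unfolding H_def F_def Z_def using u0 by simp
    also have "\<dots> = (\<Sum>y\<in>S. F y * prob (A \<inter> {\<omega> \<in> space M. X u \<omega> = y}))" by (rule decomp[OF u0 A])
    also have "\<dots> = R u" unfolding R_def
    proof (intro sum.cong refl)
      fix y assume "y \<in> S"
      have "F y = (\<Sum>z\<in>S. if y = z then G u z else 0)"
        unfolding F_def using True by (intro sum.cong) (auto simp: g_def indicator_def)
      also have "\<dots> = G u y" using finS \<open>y \<in> S\<close> by simp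
      finally show "F y * prob (A \<inter> {\<omega> \<in> space M. X u \<omega> = y}) = G u y * prob (A \<inter> {\<omega> \<in> space M. X u \<omega> = y})" by simp
    qed
    finally show ?thesis using True by simp
  next
    case False
    then show ?thesis by (simp add: H_def g_def)
  qed
  show "(\<integral>\<omega>. indicator A \<omega> * set_lebesgue_integral lborel {s..t} (\<lambda>u. G u (X u \<omega>)) \<partial>M)
        = set_lebesgue_integral lborel {s..t} R"
  proof -
    have "(\<integral>\<omega>. indicator A \<omega> * set_lebesgue_integral lborel {s..t} (\<lambda>u. G u (X u \<omega>)) \<partial>M)
        = (\<integral>\<omega>. (\<integral>u. H (u, \<omega>) \<partial>lborel) \<partial>M)"
      using left by (intro Bochner_Integration.integral_cong) auto
    also have "\<dots> = (\<integral>u. indicator {s..t} u * R u \<partial>lborel)" unfolding Fub right ..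
    finally show ?thesis by (simp add: set_lebesgue_integral_def)
  qed
  have "integrable lborel (\<lambda>u. (\<integral>\<omega>. H (u, \<omega>) \<partial>M))"
    using pair_sigma_finite.integrable_fst'[OF PSF iH] by simp
  then show "set_integrable lborel {s..t} R" unfolding set_integrable_def right by simp
qed

end


lemma si_sum:
  fixes f :: "'i \<Rightarrow> 'b \<Rightarrow> real"
  assumes "finite I" "\<And>i. i \<in> I \<Longrightarrow> set_integrable M A (f i)"
  shows "set_integrable M A (\<lambda>u. \<Sum>i\<in>I. f i u)"
proof -
  have "integrable M (\<lambda>x. \<Sum>i\<in>I. indicator A x *\<^sub>R f i x)"
    using assms unfolding set_integrable_def by (intro Bochner_Integration.integrable_sum) auto
  then show ?thesis unfolding set_integrable_def by (simp add: sum_distrib_left)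
qed

lemma si_int_sum:
  fixes f :: "'i \<Rightarrow> 'b \<Rightarrow> real"
  assumes "finite I" "\<And>i. i \<in> I \<Longrightarrow> set_integrable M A (f i)"
  shows "set_lebesgue_integral M A (\<lambda>u. \<Sum>i\<in>I. f i u) = (\<Sum>i\<in>I. set_lebesgue_integral M A (f i))"
proof -
  have "set_lebesgue_integral M A (\<lambda>u. \<Sum>i\<in>I. f i u) = (\<integral>x. (\<Sum>i\<in>I. indicator A x *\<^sub>R f i x) \<partial>M)"
    unfolding set_lebesgue_integral_def by (simp add: sum_distrib_left)
  also have "\<dots> = (\<Sum>i\<in>I. set_lebesgue_integral M A (f i))"
    using assms unfolding set_integrable_def set_lebesgue_integral_def by (intro Bochner_Integration.integral_sum) auto
  finally show ?thesis .
qed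

lemma gen_entry_si:
  assumes "is_generator S L" "x \<in> S" "y \<in> S" "0 \<le> s" "s \<le> t"
  shows "set_integrable lborel {s..t} (\<lambda>u. L u x y)"
proof -
  have "set_integrable lborel {0..t} (\<lambda>u. L u x y)"
    using assms unfolding is_generator_def by (meson order_trans)
  then show ?thesis by (rule set_integrable_subset) (use assms(4) in auto)
qed

lemma gen_apply_si:
  assumes "is_generator S L" "finite S" "x \<in> S" "0 \<le> s" "s \<le> t"
  shows "set_integrable lborel {s..t} (\<lambda>u. gen_apply S L u f x)"
proof -
  have w: "set_integrable lborel {s..t} (\<lambda>u. L u x w * f w)" if "w \<in> S" for w
    using gen_entry_si[OF assms(1,3) that assms(4,5)] by (rule set_integrable_mult_left)
  show ?thesis unfolding gen_apply_def by (rule si_sum[OF assms(2) w])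
qed

lemma prob_diff_le:
  assumes "prob_space M" "P \<in> sets M" "Q \<in> sets M" "D \<in> sets M" "P - D \<subseteq> Q" "Q - D \<subseteq> P"
  shows "\<bar>measure M P - measure M Q\<bar> \<le> measure M D"
proof -
  interpret prob_space M by fact
  have "prob P \<le> prob (Q \<union> D)" using assms by (intro finite_measure_mono) auto
  also have "\<dots> \<le> prob Q + prob D" using assms by (intro measure_Un_le) auto
  finally have 1: "prob P \<le> prob Q + prob D" .
  have "prob Q \<le> prob (P \<union> D)" using assms by (intro finite_measure_mono) auto
  also have "\<dots> \<le> prob P + prob D" using assms by (intro measure_Un_le) auto
  finally have 2: "prob Q \<le> prob P + prob D" .
  from 1 2 show ?thesis by linarith
qed

lemma in_nat_filt: "0 \<le> u \<Longrightarrow> u \<le> s \<Longrightarrow> ev M Y u y \<in> sets (nat_filt M Y s)"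
  unfolding nat_filt_def by (rule in_measure_of) (unfold ev_def, blast+)

locale mainctx = proc M S X for M :: "'a measure" and S X +
  fixes Y :: "real \<Rightarrow> 'a \<Rightarrow> real" and Si :: "real set" and cd :: "real \<times> real \<Rightarrow> real"
    and L :: "real \<Rightarrow> real \<times> real \<Rightarrow> real \<times> real \<Rightarrow> real" and Li :: "real \<Rightarrow> real \<Rightarrow> real \<Rightarrow> real"
  assumes Ydef: "\<And>t \<omega>. Y t \<omega> = cd (X t \<omega>)"
    and cdS: "\<And>z. z \<in> S \<Longrightarrow> cd z \<in> Si"
    and finSi: "finite Si"
    and genX: "is_generator S L" and genY: "is_generator Si Li"
    and evYm: "\<And>t y. 0 \<le> t \<Longrightarrow> ev M Y t y \<in> sets M"
    and MX: "\<And>s t f. 0 \<le> s \<Longrightarrow> s \<le> t \<Longrightarrow>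
        integrable M (\<lambda>\<omega>. set_lebesgue_integral lborel {s..t} (\<lambda>u. gen_apply S L u f (X u \<omega>))) \<and>
        (\<forall>A\<in>sets (nat_filt M X s). set_lebesgue_integral M A (\<lambda>\<omega>. f (X t \<omega>) - f (X s \<omega>)
              - set_lebesgue_integral lborel {s..t} (\<lambda>u. gen_apply S L u f (X u \<omega>))) = 0)"
    and MY: "\<And>s t f. 0 \<le> s \<Longrightarrow> s \<le> t \<Longrightarrow>
        integrable M (\<lambda>\<omega>. set_lebesgue_integral lborel {s..t} (\<lambda>u. gen_apply Si Li u f (Y u \<omega>))) \<and>
        (\<forall>A\<in>sets (nat_filt M Y s). set_lebesgue_integral M A (\<lambda>\<omega>. f (Y t \<omega>) - f (Y s \<omega>)
              - set_lebesgue_integral lborel {s..t} (\<lambda>u. gen_apply Si Li u f (Y u \<omega>))) = 0)"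
begin

definition GX where "GX y u z = gen_apply S L u (\<lambda>w. if cd w = y then 1 else 0) z"
definition GY where "GY y u z = gen_apply Si Li u (\<lambda>v. if v = y then 1 else 0) (cd z)"
definition cc where "cc y u z = GX y u z - GY y u z"
definition Phi where "Phi x y u = (\<Sum>z\<in>S. cc y u z * prob (ev M Y u x \<inter> ev M X u z))"
definition kap where "kap u = (\<Sum>z\<in>S. \<Sum>w\<in>S. \<bar>L u w z\<bar>)"
definition CC where "CC y u = (\<Sum>z\<in>S. \<bar>cc y u z\<bar>)"

lemma evX: "ev M X t z = {\<omega> \<in> space M. X t \<omega> = z}" by (simp add: ev_def)

lemma evY_filtX: assumes "0 \<le> s" shows "ev M Y s x \<in> sets (nat_filt M X s)"
proof -
  have "ev M Y s x = (\<Union>z\<in>{z\<in>S. cd z = x}. ev M X s z)"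
    using inS[OF assms] by (auto simp: ev_def Ydef)
  also have "\<dots> \<in> sets (nat_filt M X s)"
    using finS assms by (intro sets.finite_UN in_nat_filt) auto
  finally show ?thesis .
qed

lemma ind_int: assumes "0 \<le> t" shows "integrable M (\<lambda>\<omega>. if cd (X t \<omega>) = y then 1 else (0::real))"
proof -
  have "integrable M (indicator (ev M Y t y) :: 'a \<Rightarrow> real)"
    using evYm[OF assms] by (intro integrable_real_indicator) (auto simp: less_top[symmetric])
  moreover have "integrable M (\<lambda>\<omega>. if cd (X t \<omega>) = y then 1 else (0::real)) = integrable M (indicator (ev M Y t y) :: 'a \<Rightarrow> real)"
    by (rule Bochner_Integration.integrable_cong) (auto simp: ev_def Ydef indicator_def)
  ultimately show ?thesis by simp
qed

lemma mart_eq: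
  assumes st: "0 \<le> s" "s \<le> t" and A: "A \<in> sets (nat_filt M X s)" "A \<in> sets (nat_filt M Y s)" "A \<in> sets M"
  shows "(\<integral>\<omega>. indicator A \<omega> * set_lebesgue_integral lborel {s..t} (\<lambda>u. GX y u (X u \<omega>)) \<partial>M)
       = (\<integral>\<omega>. indicator A \<omega> * set_lebesgue_integral lborel {s..t} (\<lambda>u. GY y u (X u \<omega>)) \<partial>M)"
proof -
  define a where "a = (\<lambda>\<omega>. (if cd (X t \<omega>) = y then 1 else (0::real)) - (if cd (X s \<omega>) = y then 1 else 0))"
  define IX where "IX = (\<lambda>\<omega>. set_lebesgue_integral lborel {s..t} (\<lambda>u. GX y u (X u \<omega>)))"
  define IY where "IY = (\<lambda>\<omega>. set_lebesgue_integral lborel {s..t} (\<lambda>u. GY y u (X u \<omega>)))"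
  from MX[OF st, of "\<lambda>w. if cd w = y then 1 else 0"] A(1)
  have iX: "integrable M IX" and zX: "(\<integral>\<omega>. indicator A \<omega> * (a \<omega> - IX \<omega>) \<partial>M) = 0"
    by (auto simp: IX_def GX_def a_def set_lebesgue_integral_def)
  from MY[OF st, of "\<lambda>v. if v = y then 1 else 0"] A(2)
  have iY: "integrable M IY" and zY: "(\<integral>\<omega>. indicator A \<omega> * (a \<omega> - IY \<omega>) \<partial>M) = 0"
    by (auto simp: IY_def GY_def a_def set_lebesgue_integral_def Ydef)
  have ia: "integrable M a" unfolding a_def using st by (intro Bochner_Integration.integrable_diff ind_int) auto
  have "(\<integral>\<omega>. indicator A \<omega> * (a \<omega> - IX \<omega>) \<partial>M) = (\<integral>\<omega>. indicator A \<omega> * a \<omega> \<partial>M) - (\<integral>\<omega>. indicator A \<omega> * IX \<omega> \<partial>M)"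
    using A(3) ia iX by (subst Bochner_Integration.integral_diff[symmetric])
      (auto intro!: integrable_real_mult_indicator[simplified mult.commute] simp: right_diff_distrib mult.commute)
  moreover have "(\<integral>\<omega>. indicator A \<omega> * (a \<omega> - IY \<omega>) \<partial>M) = (\<integral>\<omega>. indicator A \<omega> * a \<omega> \<partial>M) - (\<integral>\<omega>. indicator A \<omega> * IY \<omega> \<partial>M)"
    using A(3) ia iY by (subst Bochner_Integration.integral_diff[symmetric])
      (auto intro!: integrable_real_mult_indicator[simplified mult.commute] simp: right_diff_distrib mult.commute)
  ultimately show ?thesis using zX zY by (simp add: IX_def IY_def)
qed

lemma ifmult: "(if P then 1 else 0) * (x::real) = (if P then x else 0)" by simp

lemma GX_si: "z \<in> S \<Longrightarrow> 0 \<le> s \<Longrightarrow> s \<le> t \<Longrightarrow> set_integrable lborel {s..t} (\<lambda>u. GX y u z)"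
  unfolding GX_def by (rule gen_apply_si[OF genX finS])

lemma GY_si: "z \<in> S \<Longrightarrow> 0 \<le> s \<Longrightarrow> s \<le> t \<Longrightarrow> set_integrable lborel {s..t} (\<lambda>u. GY y u z)"
  unfolding GY_def by (rule gen_apply_si[OF genY finSi cdS])

lemma cc_si: "z \<in> S \<Longrightarrow> 0 \<le> s \<Longrightarrow> s \<le> t \<Longrightarrow> set_integrable lborel {s..t} (\<lambda>u. cc y u z)"
  unfolding cc_def using GX_si GY_si by (intro set_integral_diff(1))

lemma key_zero:
  assumes "0 \<le> s" "s \<le> t"
  shows "set_lebesgue_integral lborel {s..t} (\<lambda>u. \<Sum>z\<in>S. cc y u z * prob (ev M Y s x \<inter> ev M X u z)) = 0"
proof -
  define A where "A = ev M Y s x"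
  have A: "A \<in> sets (nat_filt M X s)" "A \<in> sets (nat_filt M Y s)" "A \<in> sets M"
    unfolding A_def using assms evY_filtX[OF assms(1)] in_nat_filt[of s s M Y x] evYm[OF assms(1)] by auto
  note fX = fubini_path[OF assms A(3), of "GX y"] and fY = fubini_path[OF assms A(3), of "GY y"]
  have iX: "set_integrable lborel {s..t} (\<lambda>u. \<Sum>z\<in>S. GX y u z * prob (A \<inter> ev M X u z))"
    using fX(2) GX_si assms by (simp add: evX)
  have iY: "set_integrable lborel {s..t} (\<lambda>u. \<Sum>z\<in>S. GY y u z * prob (A \<inter> ev M X u z))"
    using fY(2) GY_si assms by (simp add: evX)
  have eX: "set_lebesgue_integral lborel {s..t} (\<lambda>u. \<Sum>z\<in>S. GX y u z * prob (A \<inter> ev M X u z))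
      = (\<integral>\<omega>. indicator A \<omega> * set_lebesgue_integral lborel {s..t} (\<lambda>u. GX y u (X u \<omega>)) \<partial>M)"
    using fX(1) GX_si assms by (simp add: evX)
  have eY: "set_lebesgue_integral lborel {s..t} (\<lambda>u. \<Sum>z\<in>S. GY y u z * prob (A \<inter> ev M X u z))
      = (\<integral>\<omega>. indicator A \<omega> * set_lebesgue_integral lborel {s..t} (\<lambda>u. GY y u (X u \<omega>)) \<partial>M)"
    using fY(1) GY_si assms by (simp add: evX)
  have "set_lebesgue_integral lborel {s..t} (\<lambda>u. \<Sum>z\<in>S. cc y u z * prob (A \<inter> ev M X u z))
     = set_lebesgue_integral lborel {s..t} (\<lambda>u. (\<Sum>z\<in>S. GX y u z * prob (A \<inter> ev M X u z)) - (\<Sum>z\<in>S. GY y u z * prob (A \<inter> ev M X u z)))"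
    by (simp add: cc_def left_diff_distrib sum_subtractf)
  also have "\<dots> = 0" using set_integral_diff(2)[OF iX iY] eX eY mart_eq[OF assms A] by simp
  finally show ?thesis by (simp add: A_def)
qed

lemma jump_bound:
  assumes "0 \<le> s" "s \<le> u"
  shows "prob {\<omega> \<in> space M. X s \<omega> \<noteq> X u \<omega>} \<le> set_lebesgue_integral lborel {s..u} kap"
proof -
  define kz where "kz = (\<lambda>z v. \<Sum>w\<in>S. \<bar>L v w z\<bar>)"
  have ikz: "set_integrable lborel {s..u} (kz z)" if "z \<in> S" for z
    unfolding kz_def using finS gen_entry_si[OF genX _ that assms] by (intro si_sum set_integrable_abs) auto
  have one: "prob (ev M X s z - ev M X u z) \<le> set_lebesgue_integral lborel {s..u} (kz z)" if z: "z \<in> S" for z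
  proof -
    define A where "A = ev M X s z"
    define d where "d = (\<lambda>w::real\<times>real. if w = z then 1 else (0::real))"
    define I where "I = (\<lambda>\<omega>. set_lebesgue_integral lborel {s..u} (\<lambda>v. gen_apply S L v d (X v \<omega>)))"
    have A: "A \<in> sets (nat_filt M X s)" "A \<in> sets M" unfolding A_def
      using assms in_nat_filt[of s s M X z] evm[of s z] by (auto simp: evX)
    from MX[OF assms, of d] A(1)
    have iI: "integrable M I" and z0: "(\<integral>\<omega>. indicator A \<omega> * (d (X u \<omega>) - d (X s \<omega>) - I \<omega>) \<partial>M) = 0"
      by (auto simp: I_def set_lebesgue_integral_def)
    have du: "(\<integral>\<omega>. indicator A \<omega> * d (X u \<omega>) \<partial>M) = prob (A \<inter> ev M X u z)"
      using decomp[OF _ A(2), of u d] assms z finS by (simp add: d_def evX ifmult)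
    have ds: "(\<integral>\<omega>. indicator A \<omega> * d (X s \<omega>) \<partial>M) = prob A"
    proof -
      have "(\<integral>\<omega>. indicator A \<omega> * d (X s \<omega>) \<partial>M) = prob (A \<inter> ev M X s z)"
        using decomp[OF _ A(2), of s d] assms z finS by (simp add: d_def evX ifmult)
      also have "A \<inter> ev M X s z = A" by (simp add: A_def)
      finally show ?thesis .
    qed
    have idu: "integrable M (\<lambda>\<omega>. indicator A \<omega> * d (X t \<omega>))" if "0 \<le> t" for t
    proof -
      have "d \<in> borel_measurable borel" unfolding d_def by measurable
      then have "(\<lambda>\<omega>. d (X t \<omega>)) \<in> borel_measurable M" by (rule measurable_compose[OF Xmeas[OF that]])
      then have "integrable M (\<lambda>\<omega>. d (X t \<omega>))"
        by (intro integrable_const_bound[where B=1]) (auto simp: d_def)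
      from integrable_mult_indicator[OF A(2) this] show ?thesis by simp
    qed
    have "0 = (\<integral>\<omega>. indicator A \<omega> * d (X u \<omega>) - indicator A \<omega> * d (X s \<omega>) - indicator A \<omega> * I \<omega> \<partial>M)"
      using z0 by (simp add: algebra_simps)
    also have "\<dots> = prob (A \<inter> ev M X u z) - prob A - (\<integral>\<omega>. indicator A \<omega> * I \<omega> \<partial>M)"
    proof -
      have iAI: "integrable M (\<lambda>\<omega>. indicator A \<omega> * I \<omega>)"
        using integrable_mult_indicator[OF A(2) iI] by simp
      have i2: "integrable M (\<lambda>\<omega>. indicator A \<omega> * d (X u \<omega>) - indicator A \<omega> * d (X s \<omega>))"
        using idu[of u] idu[of s] assms by (intro Bochner_Integration.integrable_diff) auto
      show ?thesis
        using Bochner_Integration.integral_diff[OF i2 iAI] Bochner_Integration.integral_diff[OF idu[of u] idu[of s]] assms du ds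
        by simp
    qed
    finally have e1: "prob A - prob (A \<inter> ev M X u z) = - (\<integral>\<omega>. indicator A \<omega> * I \<omega> \<partial>M)" by simp
    define R where "R = (\<lambda>v. \<Sum>w\<in>S. gen_apply S L v d w * prob (A \<inter> ev M X v w))"
    have fb: "(\<integral>\<omega>. indicator A \<omega> * I \<omega> \<partial>M) = set_lebesgue_integral lborel {s..u} R"
         "set_integrable lborel {s..u} R"
      using fubini_path[OF assms A(2), of "\<lambda>v w. gen_apply S L v d w"] gen_apply_si[OF genX finS _ assms]
      by (auto simp: I_def R_def evX)
    have Rb: "\<bar>R v\<bar> \<le> kz z v" for v
    proof -
      have "\<bar>R v\<bar> \<le> (\<Sum>w\<in>S. \<bar>gen_apply S L v d w * prob (A \<inter> ev M X v w)\<bar>)" unfolding R_def by (rule sum_abs)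
      also have "\<dots> \<le> (\<Sum>w\<in>S. \<bar>L v w z\<bar>)"
      proof (intro sum_mono)
        fix w assume "w \<in> S"
        have g: "gen_apply S L v d w = L v w z" unfolding gen_apply_def d_def using finS z
          by (simp add: if_distrib cong: if_cong)
        have "\<bar>prob (A \<inter> ev M X v w)\<bar> \<le> 1" by simp
        then show "\<bar>gen_apply S L v d w * prob (A \<inter> ev M X v w)\<bar> \<le> \<bar>L v w z\<bar>"
          unfolding g abs_mult by (simp add: mult_left_le)
      qed
      finally show ?thesis by (simp add: kz_def)
    qed
    have "prob (ev M X s z - ev M X u z) = prob A - prob (A \<inter> ev M X u z)"
      unfolding A_def using evm assms by (subst finite_measure_Diff') (auto simp: evX)
    also have "\<dots> \<le> \<bar>set_lebesgue_integral lborel {s..u} R\<bar>" using e1 fb by simp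
    also have "\<dots> \<le> set_lebesgue_integral lborel {s..u} (\<lambda>v. \<bar>R v\<bar>)"
      using set_integral_norm_bound[OF fb(2)] by simp
    also have "\<dots> \<le> set_lebesgue_integral lborel {s..u} (kz z)"
      using Rb fb(2) ikz[OF z] by (intro set_integral_mono set_integrable_abs) auto
    finally show ?thesis .
  qed
  have "{\<omega> \<in> space M. X s \<omega> \<noteq> X u \<omega>} \<subseteq> (\<Union>z\<in>S. ev M X s z - ev M X u z)"
    using inS assms by (auto simp: evX)
  then have "prob {\<omega> \<in> space M. X s \<omega> \<noteq> X u \<omega>} \<le> prob (\<Union>z\<in>S. ev M X s z - ev M X u z)"
    using finS evm assms by (intro finite_measure_mono) (auto simp: evX)
  also have "\<dots> \<le> (\<Sum>z\<in>S. prob (ev M X s z - ev M X u z))"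
    using finS evm assms by (intro finite_measure_subadditive_finite) (auto simp: evX)
  also have "\<dots> \<le> (\<Sum>z\<in>S. set_lebesgue_integral lborel {s..u} (kz z))" by (intro sum_mono one)
  also have "\<dots> = set_lebesgue_integral lborel {s..u} kap"
  proof -
    have "kap = (\<lambda>v. \<Sum>z\<in>S. kz z v)" by (simp add: kap_def kz_def fun_eq_iff)
    then show ?thesis using si_int_sum[of S lborel "{s..u}" kz, OF finS ikz] by simp
  qed
  finally show ?thesis .
qed

lemma kap_nn: "0 \<le> kap u" unfolding kap_def by (intro sum_nonneg) auto

lemma CC_nn: "0 \<le> CC y u" unfolding CC_def by (intro sum_nonneg) auto

lemma kap_si: assumes "0 \<le> s" "s \<le> t" shows "set_integrable lborel {s..t} kap"
proof -
  have e: "set_integrable lborel {s..t} (\<lambda>u. \<bar>L u w z\<bar>)" if "z \<in> S" "w \<in> S" for z w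
    using gen_entry_si[OF genX that(2) that(1) assms] by (rule set_integrable_abs)
  have "set_integrable lborel {s..t} (\<lambda>u. \<Sum>w\<in>S. \<bar>L u w z\<bar>)" if "z \<in> S" for z
    by (rule si_sum[OF finS e[OF that]])
  then show ?thesis unfolding kap_def by (rule si_sum[OF finS])
qed

lemma CC_si: assumes "0 \<le> s" "s \<le> t" shows "set_integrable lborel {s..t} (CC y)"
proof -
  have "set_integrable lborel {s..t} (\<lambda>u. \<bar>cc y u z\<bar>)" if "z \<in> S" for z
    using cc_si[OF that assms] by (rule set_integrable_abs)
  then show ?thesis unfolding CC_def by (rule si_sum[OF finS])
qed

lemma Phi_si: assumes "0 \<le> s" "s \<le> t" shows "set_integrable lborel {s..t} (Phi x y)"
proof -
  define G where "G = (\<lambda>u z. if cd z = x then cc y u z else 0)"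
  have "set_integrable lborel {s..t} (\<lambda>u. G u z)" if "z \<in> S" for z
    unfolding G_def using cc_si[OF that assms] by (cases "cd z = x") (auto simp: set_integrable_def)
  from fubini_path(2)[OF assms sets.top this]
  have i: "set_integrable lborel {s..t} (\<lambda>u. \<Sum>z\<in>S. G u z * prob (space M \<inter> {\<omega> \<in> space M. X u \<omega> = z}))" by simp
  have e: "Phi x y u = (\<Sum>z\<in>S. G u z * prob (space M \<inter> {\<omega> \<in> space M. X u \<omega> = z}))" for u
    unfolding Phi_def G_def
  proof (intro sum.cong refl)
    fix z assume "z \<in> S"
    show "cc y u z * prob (ev M Y u x \<inter> ev M X u z) = (if cd z = x then cc y u z else 0) * prob (space M \<inter> {\<omega> \<in> space M. X u \<omega> = z})"
    proof (cases "cd z = x")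
      case True
      then have "ev M Y u x \<inter> ev M X u z = space M \<inter> {\<omega> \<in> space M. X u \<omega> = z}" by (auto simp: ev_def Ydef)
      then show ?thesis using True by simp
    next
      case False
      then have "ev M Y u x \<inter> ev M X u z = {}" by (auto simp: ev_def Ydef)
      then show ?thesis using False by simp
    qed
  qed
  show ?thesis using i by (simp add: e[abs_def])
qed

lemma Phi_bound:
  assumes s: "0 \<le> s" and h: "0 \<le> h"
  shows "\<bar>set_lebesgue_integral lborel {s..s+h} (Phi x y)\<bar> \<le>
          set_lebesgue_integral lborel {s..s+h} kap * set_lebesgue_integral lborel {s..s+h} (CC y)"
proof -
  define t where "t = s + h"
  have st: "0 \<le> s" "s \<le> t" using s h by (auto simp: t_def)
  define K where "K = set_lebesgue_integral lborel {s..t} kap"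
  define Psi where "Psi = (\<lambda>u. \<Sum>z\<in>S. cc y u z * prob (ev M Y s x \<inter> ev M X u z))"
  have iPsi: "set_integrable lborel {s..t} Psi"
  proof -
    have A: "ev M Y s x \<in> sets M" using evYm st by auto
    from fubini_path(2)[OF st A, of "cc y"] cc_si st show ?thesis by (simp add: Psi_def evX)
  qed
  have zPsi: "set_lebesgue_integral lborel {s..t} Psi = 0" unfolding Psi_def by (rule key_zero[OF st])
  have iPhi: "set_integrable lborel {s..t} (Phi x y)" by (rule Phi_si[OF st])
  have pw: "\<bar>Phi x y u - Psi u\<bar> \<le> CC y u * K" if u: "u \<in> {s..t}" for u
  proof -
    define D where "D = {\<omega> \<in> space M. X s \<omega> \<noteq> X u \<omega>}"
    have u0: "0 \<le> u" "s \<le> u" using u st by auto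
    have Dm: "D \<in> sets M"
    proof -
      have "D = space M - (\<Union>z\<in>S. ev M X s z \<inter> ev M X u z)"
        using inS u0 st by (auto simp: D_def evX)
      also have "\<dots> \<in> sets M"
      proof (rule sets.Diff[OF sets.top sets.finite_UN[OF finS]])
        fix z show "ev M X s z \<inter> ev M X u z \<in> sets M"
          using evm[OF st(1), of z] evm[OF u0(1), of z] by (auto simp: evX)
      qed
      finally show ?thesis .
    qed
    have pD: "prob D \<le> K"
    proof -
      have "prob D \<le> set_lebesgue_integral lborel {s..u} kap" unfolding D_def by (rule jump_bound[OF st(1) u0(2)])
      also have "\<dots> \<le> K" unfolding K_def set_lebesgue_integral_def
      proof (rule integral_mono)
        show "integrable lborel (\<lambda>v. indicator {s..u} v *\<^sub>R kap v)"
          using kap_si[OF st(1) u0(2)] by (simp add: set_integrable_def)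
        show "integrable lborel (\<lambda>v. indicator {s..t} v *\<^sub>R kap v)"
          using kap_si[OF st] by (simp add: set_integrable_def)
        fix v show "indicator {s..u} v *\<^sub>R kap v \<le> indicator {s..t} v *\<^sub>R kap v"
          using u kap_nn[of v] by (auto simp: indicator_def)
      qed
      finally show ?thesis .
    qed
    have eqd: "Phi x y u - Psi u = (\<Sum>z\<in>S. cc y u z * (prob (ev M Y u x \<inter> ev M X u z) - prob (ev M Y s x \<inter> ev M X u z)))"
      unfolding Phi_def Psi_def by (simp only: sum_subtractf[symmetric] right_diff_distrib)
    have "\<bar>\<Sum>z\<in>S. cc y u z * (prob (ev M Y u x \<inter> ev M X u z) - prob (ev M Y s x \<inter> ev M X u z))\<bar> \<le> (\<Sum>z\<in>S. \<bar>cc y u z\<bar> * K)"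
    proof -
      have "\<bar>\<Sum>z\<in>S. cc y u z * (prob (ev M Y u x \<inter> ev M X u z) - prob (ev M Y s x \<inter> ev M X u z))\<bar>
          \<le> (\<Sum>z\<in>S. \<bar>cc y u z * (prob (ev M Y u x \<inter> ev M X u z) - prob (ev M Y s x \<inter> ev M X u z))\<bar>)"
        by (rule sum_abs)
      also have "\<dots> \<le> (\<Sum>z\<in>S. \<bar>cc y u z\<bar> * K)"
      proof (intro sum_mono)
        fix z assume z: "z \<in> S"
        have "\<bar>prob (ev M Y u x \<inter> ev M X u z) - prob (ev M Y s x \<inter> ev M X u z)\<bar> \<le> prob D"
        proof (rule prob_diff_le[OF prob_space_axioms])
          show "ev M Y u x \<inter> ev M X u z \<in> sets M"
            using evm[OF u0(1), of z] by (intro sets.Int evYm[OF u0(1)]) (simp add: evX)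
          show "ev M Y s x \<inter> ev M X u z \<in> sets M"
            using evm[OF u0(1), of z] by (intro sets.Int evYm[OF st(1)]) (simp add: evX)
          show "D \<in> sets M" by (rule Dm)
          show "ev M Y u x \<inter> ev M X u z - D \<subseteq> ev M Y s x \<inter> ev M X u z"
            by (auto simp: D_def ev_def Ydef)
          show "ev M Y s x \<inter> ev M X u z - D \<subseteq> ev M Y u x \<inter> ev M X u z"
            by (auto simp: D_def ev_def Ydef)
        qed
        also have "\<dots> \<le> K" by (rule pD)
        finally show "\<bar>cc y u z * (prob (ev M Y u x \<inter> ev M X u z) - prob (ev M Y s x \<inter> ev M X u z))\<bar> \<le> \<bar>cc y u z\<bar> * K"
          unfolding abs_mult by (rule mult_left_mono) simp
      qed
      finally show ?thesis .
    qed
    also have "\<dots> = CC y u * K" by (simp add: CC_def sum_distrib_right)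
    finally show ?thesis unfolding eqd .
  qed
  have iD: "set_integrable lborel {s..t} (\<lambda>u. Phi x y u - Psi u)" using iPhi iPsi by (rule set_integral_diff(1))
  have eqI: "set_lebesgue_integral lborel {s..t} (Phi x y) = set_lebesgue_integral lborel {s..t} (\<lambda>u. Phi x y u - Psi u)"
    using set_integral_diff(2)[OF iPhi iPsi] zPsi by simp
  have "\<bar>set_lebesgue_integral lborel {s..t} (Phi x y)\<bar> \<le> set_lebesgue_integral lborel {s..t} (\<lambda>u. \<bar>Phi x y u - Psi u\<bar>)"
    using set_integral_norm_bound[OF iD] unfolding eqI by simp
  also have "\<dots> \<le> set_lebesgue_integral lborel {s..t} (\<lambda>u. CC y u * K)"
  proof (rule set_integral_mono)
    show "set_integrable lborel {s..t} (\<lambda>u. \<bar>Phi x y u - Psi u\<bar>)" by (rule set_integrable_abs[OF iD])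
    show "set_integrable lborel {s..t} (\<lambda>u. CC y u * K)" using CC_si[OF st] by (rule set_integrable_mult_left)
    fix u assume "u \<in> {s..t}" then show "\<bar>Phi x y u - Psi u\<bar> \<le> CC y u * K" by (rule pw)
  qed
  also have "\<dots> = K * set_lebesgue_integral lborel {s..t} (CC y)" by simp
  finally show ?thesis by (simp add: K_def t_def)
qed

lemma Phi_ae: "AE t in lborel. 0 \<le> t \<longrightarrow> Phi x y t = 0"
proof (rule ae_zero_from_intervals)
  show "set_integrable lborel {0..T} (Phi x y)" if "0 \<le> T" for T using Phi_si that by simp
  fix a b :: real assume ab: "0 \<le> a" "a \<le> b"
  show "set_lebesgue_integral lborel {a..b} (Phi x y) = 0"
  proof (rule zero_from_local_bound[where \<kappa>=kap and C="CC y", OF _ _ _ kap_nn CC_nn Phi_bound ab])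
    fix T :: real assume "0 \<le> T"
    then show "set_integrable lborel {0..T} (Phi x y)" "set_integrable lborel {0..T} kap"
      "set_integrable lborel {0..T} (CC y)"
      by (auto intro!: Phi_si kap_si CC_si)
  qed
qed

lemma final:
  "AE t in lborel. 0 \<le> t \<longrightarrow> (\<forall>g xi. xi \<in> Si \<and> measure M (ev M Y t xi) > 0 \<longrightarrow>
      Qop M X Y t (gen_apply S L t (\<lambda>p. g (cd p))) xi = (\<Sum>yi\<in>Si. Li t xi yi * g yi))"
proof -
  have "AE t in lborel. \<forall>x\<in>Si. \<forall>y\<in>Si. 0 \<le> t \<longrightarrow> Phi x y t = 0"
    using finSi Phi_ae by (intro eventually_ball_finite ballI) auto
  then show ?thesis
  proof eventually_elim
    case (elim t)
    show ?case
    proof (intro impI allI)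
      fix g :: "real \<Rightarrow> real" and x
      assume t0: "0 \<le> t" and xP: "x \<in> Si \<and> measure M (ev M Y t x) > 0"
      define A where "A = ev M Y t x"
      have Am: "A \<in> sets M" unfolding A_def using evYm t0 by auto
      have PA: "prob A > 0" using xP by (simp add: A_def)
      define p where "p = (\<lambda>z. prob (A \<inter> ev M X t z))"
      define F where "F = gen_apply S L t (\<lambda>p. g (cd p))"
      have Ph: "Phi x y t = 0" if "y \<in> Si" for y using elim xP that t0 by auto
      have Fz: "F z = (\<Sum>y\<in>Si. g y * GX y t z)" if z: "z \<in> S" for z
      proof -
        have "(\<Sum>y\<in>Si. g y * GX y t z) = (\<Sum>y\<in>Si. \<Sum>w\<in>S. L t z w * (g y * (if cd w = y then 1 else 0)))"
          unfolding GX_def gen_apply_def by (simp add: sum_distrib_left mult_ac)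
        also have "\<dots> = (\<Sum>w\<in>S. L t z w * (\<Sum>y\<in>Si. g y * (if cd w = y then 1 else 0)))"
          by (subst sum.swap) (simp add: sum_distrib_left)
        also have "\<dots> = (\<Sum>w\<in>S. L t z w * g (cd w))"
        proof (intro sum.cong refl)
          fix w assume "w \<in> S"
          have "(\<Sum>y\<in>Si. g y * (if cd w = y then 1 else 0)) = (\<Sum>y\<in>Si. if cd w = y then g y else 0)"
            by (intro sum.cong) auto
          also have "\<dots> = g (cd w)" using finSi cdS[OF \<open>w \<in> S\<close>] by simp
          finally show "L t z w * (\<Sum>y\<in>Si. g y * (if cd w = y then 1 else 0)) = L t z w * g (cd w)" by simp
        qed
        finally show ?thesis by (simp add: F_def gen_apply_def)
      qed
      have GYz: "GY y t z = Li t (cd z) y" if "z \<in> S" "y \<in> Si" for y z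
      proof -
        have "GY y t z = (\<Sum>v\<in>Si. if v = y then Li t (cd z) v else 0)"
          unfolding GY_def gen_apply_def by (intro sum.cong) auto
        also have "\<dots> = Li t (cd z) y" using finSi that by simp
        finally show ?thesis .
      qed
      have pz: "Li t (cd z) y * p z = Li t x y * p z" if "z \<in> S" for y z
      proof (cases "cd z = x")
        case False
        then have "A \<inter> ev M X t z = {}" by (auto simp: A_def ev_def Ydef)
        then show ?thesis by (simp add: p_def)
      qed simp
      have sump: "(\<Sum>z\<in>S. p z) = prob A"
      proof -
        have "(\<integral>\<omega>. indicator A \<omega> * (\<lambda>_. 1) (X t \<omega>) \<partial>M) = (\<Sum>z\<in>S. (\<lambda>_. 1) z * prob (A \<inter> {\<omega> \<in> space M. X t \<omega> = z}))"
          by (rule decomp[OF t0 Am])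
        then show ?thesis using Am by (simp add: p_def evX Int_absorb2 sets.sets_into_space)
      qed
      have "(\<integral>\<omega>. indicator A \<omega> * F (X t \<omega>) \<partial>M) = (\<Sum>z\<in>S. F z * p z)"
        using decomp[OF t0 Am, of F] by (simp add: p_def evX)
      also have "\<dots> = (\<Sum>z\<in>S. \<Sum>y\<in>Si. g y * (GX y t z * p z))"
        by (intro sum.cong refl) (simp add: Fz sum_distrib_right sum_distrib_left mult_ac)
      also have "\<dots> = (\<Sum>y\<in>Si. g y * (\<Sum>z\<in>S. GX y t z * p z))"
        by (subst sum.swap) (simp add: sum_distrib_left)
      also have "\<dots> = (\<Sum>y\<in>Si. g y * (\<Sum>z\<in>S. GY y t z * p z))"
      proof (intro sum.cong refl)
        fix y assume y: "y \<in> Si"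
        have "(\<Sum>z\<in>S. GX y t z * p z) - (\<Sum>z\<in>S. GY y t z * p z) = Phi x y t"
          unfolding Phi_def cc_def p_def A_def by (simp add: sum_subtractf left_diff_distrib)
        then show "g y * (\<Sum>z\<in>S. GX y t z * p z) = g y * (\<Sum>z\<in>S. GY y t z * p z)" using Ph[OF y] by simp
      qed
      also have "\<dots> = (\<Sum>y\<in>Si. g y * (Li t x y * prob A))"
      proof (intro sum.cong refl)
        fix y assume y: "y \<in> Si"
        have "(\<Sum>z\<in>S. GY y t z * p z) = (\<Sum>z\<in>S. Li t x y * p z)"
          using GYz[OF _ y] pz by (intro sum.cong) auto
        also have "\<dots> = Li t x y * prob A" by (simp add: sum_distrib_left[symmetric] sump)
        finally show "g y * (\<Sum>z\<in>S. GY y t z * p z) = g y * (Li t x y * prob A)" by simp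
      qed
      also have "\<dots> = (\<Sum>y\<in>Si. Li t x y * g y) * prob A"
        by (subst sum_distrib_right) (simp add: mult_ac)
      finally have "(\<integral>\<omega>. indicator A \<omega> * F (X t \<omega>) \<partial>M) = (\<Sum>y\<in>Si. Li t x y * g y) * prob A" .
      then show "Qop M X Y t (gen_apply S L t (\<lambda>p. g (cd p))) x = (\<Sum>yi\<in>Si. Li t x yi * g yi)"
        using PA unfolding Qop_def by (simp add: F_def[symmetric] A_def[symmetric])
    qed
  qed
qed

end



theorem theorem1p3:
  fixes M :: "'a measure"
    and S1 S2 :: "real set"
    and X1 X2 :: "real \<Rightarrow> 'a \<Rightarrow> real"
    and L :: "real \<Rightarrow> real \<times> real \<Rightarrow> real \<times> real \<Rightarrow> real"
    and i :: nat
    and Li :: "real \<Rightarrow> real \<Rightarrow> real \<Rightarrow> real"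
  assumes "prob_space M"
    and "finite S1" and "finite S2"
    and "cadlag M (\<lambda>t \<omega>. (X1 t \<omega>, X2 t \<omega>))"
    and "markov_chain_gen M (S1 \<times> S2) (\<lambda>t \<omega>. (X1 t \<omega>, X2 t \<omega>)) L"
    and "i \<in> {1, 2}"
    and "markov_chain_gen M (if i = 1 then S1 else S2) (\<lambda>t \<omega>. coord i (X1 t \<omega>, X2 t \<omega>)) Li"
  shows "AE t in lborel. 0 \<le> t \<longrightarrow>
           (\<forall>g xi. xi \<in> (if i = 1 then S1 else S2) \<and>
                   measure M (ev M (\<lambda>t \<omega>. coord i (X1 t \<omega>, X2 t \<omega>)) t xi) > 0 \<longrightarrow>
              Qop M (\<lambda>t \<omega>. (X1 t \<omega>, X2 t \<omega>)) (\<lambda>t \<omega>. coord i (X1 t \<omega>, X2 t \<omega>)) t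
                  (gen_apply (S1 \<times> S2) L t (Cext i g)) xi
              = (\<Sum>yi\<in>(if i = 1 then S1 else S2). Li t xi yi * g yi))"
proof -
  define X where "X = (\<lambda>t \<omega>. (X1 t \<omega>, X2 t \<omega>))"
  define Y where "Y = (\<lambda>t \<omega>. coord i (X1 t \<omega>, X2 t \<omega>))"
  define Si where "Si = (if i = 1 then S1 else S2)"
  have mc: "finite (S1 \<times> S2)" "is_generator (S1 \<times> S2) L" "\<And>t \<omega>. 0 \<le> t \<Longrightarrow> \<omega> \<in> space M \<Longrightarrow> X t \<omega> \<in> S1 \<times> S2"
    "\<And>t y. 0 \<le> t \<Longrightarrow> ev M X t y \<in> sets M"
    "\<And>s t f. 0 \<le> s \<Longrightarrow> s \<le> t \<Longrightarrow>
        integrable M (\<lambda>\<omega>. set_lebesgue_integral lborel {s..t} (\<lambda>u. gen_apply (S1 \<times> S2) L u f (X u \<omega>))) \<and>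
        (\<forall>A\<in>sets (nat_filt M X s). set_lebesgue_integral M A (\<lambda>\<omega>. f (X t \<omega>) - f (X s \<omega>)
              - set_lebesgue_integral lborel {s..t} (\<lambda>u. gen_apply (S1 \<times> S2) L u f (X u \<omega>))) = 0)"
    using assms(5) unfolding markov_chain_gen_def X_def by blast+
  have mcY: "finite Si" "is_generator Si Li"
    "\<And>t y. 0 \<le> t \<Longrightarrow> ev M Y t y \<in> sets M"
    "\<And>s t f. 0 \<le> s \<Longrightarrow> s \<le> t \<Longrightarrow>
        integrable M (\<lambda>\<omega>. set_lebesgue_integral lborel {s..t} (\<lambda>u. gen_apply Si Li u f (Y u \<omega>))) \<and>
        (\<forall>A\<in>sets (nat_filt M Y s). set_lebesgue_integral M A (\<lambda>\<omega>. f (Y t \<omega>) - f (Y s \<omega>)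
              - set_lebesgue_integral lborel {s..t} (\<lambda>u. gen_apply Si Li u f (Y u \<omega>))) = 0)"
    using assms(7) unfolding markov_chain_gen_def Y_def Si_def by blast+
  have rc: "\<And>t \<omega>. 0 \<le> t \<Longrightarrow> \<omega> \<in> space M \<Longrightarrow> continuous (at_right t) (\<lambda>u. X u \<omega>)"
    using assms(4) unfolding cadlag_def X_def by blast
  have cdS: "coord i z \<in> Si" if "z \<in> S1 \<times> S2" for z
    using that assms(6) by (auto simp: coord_def Si_def)
  interpret P: proc M "S1 \<times> S2" X
    using assms(1) mc(1,3) mc(4)[unfolded ev_def] rc by (intro proc.intro proc_axioms.intro) auto
  interpret mainctx M "S1 \<times> S2" X Y Si "coord i" L Li
    using cdS mcY mc(2,5) by (intro mainctx.intro mainctx_axioms.intro P.proc_axioms) (auto simp: Y_def X_def)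
  show ?thesis
    using final unfolding Cext_def X_def[symmetric] Y_def[symmetric] Si_def[symmetric] by simp
qed

end
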